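(* Let $X$ be a $T_1$ topological space. Then $T''(X)$ is a ring under pointwise addition and multiplication.
   Context: For a topological space $X$, $C(X)$ denotes the set of real-valued continuous functions on $X$. A cozero set in $X$ is a set of the form $coz(g)=\{x\in X: g(x)\neq 0\}$ with $g\in C(X)$. $T''(X)$ denotes the set of all functions $f\colon X\to\mathbb{R}$ for which there is a dense cozero set $U$ of $X$ such that the restriction $f|_U$ is continuous. *)

theory Defs
  imports "HOL-Analysis.Analysis" "HOL-Algebra.Ring"
begin

definition coz :: "'a topology \<Rightarrow> ('a \<Rightarrow> real) \<Rightarrow> 'a set" where
  "coz X g = {x \<in> topspace X. g x \<noteq> 0}"

definition Tpp :: "'a topology \<Rightarrow> ('a \<Rightarrow> real) set" where
  "Tpp X = {f \<in> extensional (topspace X).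
     \<exists>g. continuous_map X euclideanreal g \<and> X closure_of (coz X g) = topspace X
         \<and> continuous_map (subtopology X (coz X g)) euclideanreal f}"

definition Tpp_ring :: "'a topology \<Rightarrow> ('a \<Rightarrow> real) ring" where
  "Tpp_ring X = \<lparr>carrier = Tpp X,
     mult = (\<lambda>f g. \<lambda>x\<in>topspace X. f x * g x),
     one = (\<lambda>x\<in>topspace X. 1),
     zero = (\<lambda>x\<in>topspace X. 0),
     add = (\<lambda>f g. \<lambda>x\<in>topspace X. f x + g x)\<rparr>"

end

theory Submission
  imports Defs
begin

lemma coz_open:
  assumes "continuous_map X euclideanreal g"
  shows "openin X (coz X g)"
proof -
  have "coz X g = {x \<in> topspace X. g x \<in> - {0}}" by (auto simp: coz_def)
  thus ?thesis using openin_continuous_map_preimage[OF assms, of "- {0}"] by auto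
qed

lemma coz_mult: "coz X (\<lambda>x. g1 x * g2 x) = coz X g1 \<inter> coz X g2"
  by (auto simp: coz_def)

lemma Tpp_common:
  assumes "f \<in> Tpp X" "h \<in> Tpp X"
  shows "\<exists>g. continuous_map X euclideanreal g \<and> X closure_of (coz X g) = topspace X
      \<and> continuous_map (subtopology X (coz X g)) euclideanreal f
      \<and> continuous_map (subtopology X (coz X g)) euclideanreal h"
proof -
  obtain g1 where g1: "continuous_map X euclideanreal g1" "X closure_of (coz X g1) = topspace X"
     "continuous_map (subtopology X (coz X g1)) euclideanreal f"
    using assms(1) unfolding Tpp_def by blast
  obtain g2 where g2: "continuous_map X euclideanreal g2" "X closure_of (coz X g2) = topspace X"
     "continuous_map (subtopology X (coz X g2)) euclideanreal h"
    using assms(2) unfolding Tpp_def by blast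
  define g where "g = (\<lambda>x. g1 x * g2 x)"
  have cg: "continuous_map X euclideanreal g" unfolding g_def using g1 g2
    by (intro continuous_map_real_mult) auto
  have cz: "coz X g = coz X g1 \<inter> coz X g2" unfolding g_def by (rule coz_mult)
  have "coz X g1 \<inter> X closure_of (coz X g2) \<subseteq> X closure_of (coz X g)"
    unfolding cz by (rule openin_Int_closure_of_subset[OF coz_open[OF g1(1)]])
  moreover have "coz X g1 \<subseteq> topspace X" unfolding coz_def by blast
  ultimately have "coz X g1 \<subseteq> X closure_of (coz X g)" unfolding g2(2) by blast
  hence "X closure_of (coz X g1) \<subseteq> X closure_of (X closure_of (coz X g))"
    by (rule closure_of_mono)
  hence "X closure_of (coz X g1) \<subseteq> X closure_of (coz X g)"
    by (simp add: closure_of_closure_of)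
  hence d: "X closure_of (coz X g) = topspace X" unfolding g1(2)
    using closure_of_subset_topspace[of X "coz X g"] by (rule subset_antisym[rotated])
  have "continuous_map (subtopology X (coz X g)) euclideanreal f"
    by (rule continuous_map_from_subtopology_mono[OF g1(3)]) (simp add: cz)
  moreover have "continuous_map (subtopology X (coz X g)) euclideanreal h"
    by (rule continuous_map_from_subtopology_mono[OF g2(3)]) (simp add: cz)
  ultimately show ?thesis using cg d by blast
qed

lemma Tpp_binop:
  fixes X :: "'a topology"
  assumes "f \<in> Tpp X" "h \<in> Tpp X"
    and op: "\<And>(Y::'a topology) a b. continuous_map Y euclideanreal a \<Longrightarrow> continuous_map Y euclideanreal b
       \<Longrightarrow> continuous_map Y euclideanreal (\<lambda>x. F (a x) (b x))"
  shows "(\<lambda>x\<in>topspace X. F (f x) (h x)) \<in> Tpp X"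
proof -
  obtain g where g: "continuous_map X euclideanreal g" "X closure_of (coz X g) = topspace X"
      "continuous_map (subtopology X (coz X g)) euclideanreal f"
      "continuous_map (subtopology X (coz X g)) euclideanreal h"
    using Tpp_common[OF assms(1,2)] by blast
  have "continuous_map (subtopology X (coz X g)) euclideanreal (\<lambda>x. F (f x) (h x))"
    by (rule op[OF g(3) g(4)])
  hence "continuous_map (subtopology X (coz X g)) euclideanreal (\<lambda>x\<in>topspace X. F (f x) (h x))"
    by (rule continuous_map_eq) simp
  moreover have "(\<lambda>x\<in>topspace X. F (f x) (h x)) \<in> extensional (topspace X)" by simp
  ultimately show ?thesis unfolding Tpp_def
    by (intro CollectI conjI exI[of _ g]) (simp_all add: g(1,2))
qed

lemma Tpp_const: "(\<lambda>x\<in>topspace X. c) \<in> Tpp X"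
proof -
  have "coz X (\<lambda>x. 1) = topspace X" by (auto simp: coz_def)
  moreover have "continuous_map (subtopology X (topspace X)) euclideanreal (\<lambda>x\<in>topspace X. c)"
    by (rule continuous_map_eq[of _ _ "\<lambda>x. c"]) auto
  moreover have "continuous_map X euclideanreal (\<lambda>x. 1::real)" by simp
  moreover have "(\<lambda>x\<in>topspace X. c) \<in> extensional (topspace X)" by simp
  ultimately show ?thesis unfolding Tpp_def
    by (intro CollectI conjI exI[of _ "\<lambda>x. 1"]) (simp_all add: closure_of_topspace)
qed

lemma Tpp_ext: "f \<in> Tpp X \<Longrightarrow> x \<notin> topspace X \<Longrightarrow> f x = undefined"
  by (auto simp: Tpp_def extensional_def)

lemma Tpp_eqI:
  assumes "f \<in> Tpp X" "\<And>x. x \<in> topspace X \<Longrightarrow> h x = f x" "\<And>x. x \<notin> topspace X \<Longrightarrow> h x = undefined"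
  shows "h = f"
proof (rule ext)
  fix x show "h x = f x"
  proof (cases "x \<in> topspace X")
    case True thus ?thesis by (simp add: assms(2))
  next
    case False thus ?thesis using assms(3)[OF False] Tpp_ext[OF assms(1) False] by simp
  qed
qed

theorem theorem2p1:
  fixes X :: "'a topology"
  assumes "t1_space X"
  shows "ring (Tpp_ring X)"
proof -
  have add: "(\<lambda>x\<in>topspace X. f x + h x) \<in> Tpp X" if "f \<in> Tpp X" "h \<in> Tpp X" for f h
    by (rule Tpp_binop[OF that, of "\<lambda>a b. a + b"]) (rule continuous_map_add)
  have mul: "(\<lambda>x\<in>topspace X. f x * h x) \<in> Tpp X" if "f \<in> Tpp X" "h \<in> Tpp X" for f h
    by (rule Tpp_binop[OF that, of "\<lambda>a b. a * b"]) (rule continuous_map_real_mult)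
  have neg: "(\<lambda>x\<in>topspace X. - f x) \<in> Tpp X" if "f \<in> Tpp X" for f
    by (rule Tpp_binop[OF that that, of "\<lambda>a b. - a"]) (rule continuous_map_minus)
  have C: "carrier (Tpp_ring X) = Tpp X" by (simp add: Tpp_ring_def)
  have A: "x \<oplus>\<^bsub>Tpp_ring X\<^esub> y = (\<lambda>t\<in>topspace X. x t + y t)" for x y by (simp add: Tpp_ring_def)
  have M: "x \<otimes>\<^bsub>Tpp_ring X\<^esub> y = (\<lambda>t\<in>topspace X. x t * y t)" for x y by (simp add: Tpp_ring_def)
  have Z: "\<zero>\<^bsub>Tpp_ring X\<^esub> = (\<lambda>t\<in>topspace X. 0)" by (simp add: Tpp_ring_def)
  have O: "\<one>\<^bsub>Tpp_ring X\<^esub> = (\<lambda>t\<in>topspace X. 1)" by (simp add: Tpp_ring_def)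
  show ?thesis
  proof (rule ringI)
    show "abelian_group (Tpp_ring X)"
    proof (rule abelian_groupI, unfold C A Z)
      fix x y assume "x \<in> Tpp X" "y \<in> Tpp X"
      thus "(\<lambda>t\<in>topspace X. x t + y t) \<in> Tpp X" by (rule add)
    next
      show "(\<lambda>t\<in>topspace X. 0) \<in> Tpp X" by (rule Tpp_const)
    next
      fix x y z :: "'a \<Rightarrow> real"
      show "(\<lambda>t\<in>topspace X. (\<lambda>t\<in>topspace X. x t + y t) t + z t) =
            (\<lambda>t\<in>topspace X. x t + (\<lambda>t\<in>topspace X. y t + z t) t)"
        by (rule ext) simp
    next
      fix x y :: "'a \<Rightarrow> real"
      show "(\<lambda>t\<in>topspace X. x t + y t) = (\<lambda>t\<in>topspace X. y t + x t)"
        by (rule ext) simp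
    next
      fix x assume x: "x \<in> Tpp X"
      show "(\<lambda>t\<in>topspace X. (\<lambda>t\<in>topspace X. 0) t + x t) = x"
        by (rule Tpp_eqI[OF x]) auto
    next
      fix x assume x: "x \<in> Tpp X"
      show "\<exists>y\<in>Tpp X. (\<lambda>t\<in>topspace X. y t + x t) = (\<lambda>t\<in>topspace X. 0)"
      proof (rule bexI[of _ "\<lambda>t\<in>topspace X. - x t"])
        show "(\<lambda>t\<in>topspace X. (\<lambda>t\<in>topspace X. - x t) t + x t) = (\<lambda>t\<in>topspace X. 0)"
          by (rule ext) simp
      qed (rule neg[OF x])
    qed
  next
    show "monoid (Tpp_ring X)"
    proof (rule monoidI, unfold C M O)
      fix x y assume "x \<in> Tpp X" "y \<in> Tpp X"
      thus "(\<lambda>t\<in>topspace X. x t * y t) \<in> Tpp X" by (rule mul)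
    next
      show "(\<lambda>t\<in>topspace X. 1) \<in> Tpp X" by (rule Tpp_const)
    next
      fix x y z :: "'a \<Rightarrow> real"
      show "(\<lambda>t\<in>topspace X. (\<lambda>t\<in>topspace X. x t * y t) t * z t) =
            (\<lambda>t\<in>topspace X. x t * (\<lambda>t\<in>topspace X. y t * z t) t)"
        by (rule ext) simp
    next
      fix x assume x: "x \<in> Tpp X"
      show "(\<lambda>t\<in>topspace X. (\<lambda>t\<in>topspace X. 1) t * x t) = x"
        by (rule Tpp_eqI[OF x]) auto
    next
      fix x assume x: "x \<in> Tpp X"
      show "(\<lambda>t\<in>topspace X. x t * (\<lambda>t\<in>topspace X. 1) t) = x"
        by (rule Tpp_eqI[OF x]) auto
    qed
  next
    fix x y z :: "'a \<Rightarrow> real"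
    show "(x \<oplus>\<^bsub>Tpp_ring X\<^esub> y) \<otimes>\<^bsub>Tpp_ring X\<^esub> z =
      x \<otimes>\<^bsub>Tpp_ring X\<^esub> z \<oplus>\<^bsub>Tpp_ring X\<^esub> y \<otimes>\<^bsub>Tpp_ring X\<^esub> z"
      unfolding A M by (rule ext) (simp add: distrib_right)
    show "z \<otimes>\<^bsub>Tpp_ring X\<^esub> (x \<oplus>\<^bsub>Tpp_ring X\<^esub> y) =
      z \<otimes>\<^bsub>Tpp_ring X\<^esub> x \<oplus>\<^bsub>Tpp_ring X\<^esub> z \<otimes>\<^bsub>Tpp_ring X\<^esub> y"
      unfolding A M by (rule ext) (simp add: distrib_left)
  qed
qed

end
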